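(* In the primal–dual differential form setting below, assume in addition that $\star_h:\hat\Lambda^k_d\to\hat\Lambda^{2-k}_p$ is bijective for $k=1,2$. Let $\sigma(t)\in\hat\Lambda^1_p$ be continuously differentiable in $t$, and let $\tilde Q(t)\in\hat\Lambda^1_d$, $\rho(t)\in\hat\Lambda^2_p$ satisfy $\partial_t\sigma+\star_h\tilde Q+\delta^h\rho=0$. Let $\zeta_p=\delta^h\sigma$ and define the dual vorticity 2-form $\zeta_d\,dS:=\star_h^{-1}\zeta_p\in\hat\Lambda^2_d$ and $\tilde v:=\star_h^{-1}\sigma\in\hat\Lambda^1_d$. Then $\zeta_d\,dS=d\tilde v$ and $$\partial_t(\zeta_d\,dS)+d\tilde Q=0 .$$ Consequently, for every cell $e'$ of the dual mesh, $\frac{d}{dt}\int_{e'}\zeta_d\,dS=-\int_{\partial e'}\tilde Q$, and since the integral of $\tilde Q$ along an edge takes the same value from either adjacent cell (with opposite orientation), $\zeta_d$ is locally conserved.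
   Context: Primal–dual differential form setting. $\Omega$ is a smooth closed oriented two-dimensional Riemannian surface with area form $dS$ and Hodge star $\star$; for $k$-forms $\alpha,\beta$ write $\langle\alpha,\beta\rangle=\int_\Omega\alpha\wedge\star\beta$ (the $L^2$ inner product). For $k=0,1,2$, $\hat\Lambda^k_p$ (primal) and $\hat\Lambda^k_d$ (dual) are finite-dimensional spaces of square-integrable, piecewise smooth $k$-forms on $\Omega$ (on a primal and a dual mesh respectively) on which the exterior derivative $d$ is defined globally, with $d\hat\Lambda^k_p\subset\hat\Lambda^{k+1}_p$ and $d\hat\Lambda^k_d\subset\hat\Lambda^{k+1}_d$ for $k=0,1$, $d^2=0$, and such that integration by parts holds: $\int_\Omega d\alpha\wedge\beta=(-1)^{j+1}\int_\Omega\alpha\wedge d\beta$ for $\alpha$ a $j$-form and $\beta$ a $(1-j)$-form taken from these spaces. $\hat\Lambda^0_p$ contains the constant functions. The discrete codifferential $\delta^h:\hat\Lambda^k_p\to\hat\Lambda^{k-1}_p$ ($k=1,2$) is defined by $\langle\gamma,\delta^h\omega\rangle=\langle d\gamma,\omega\rangle$ for all $\gamma\in\hat\Lambda^{k-1}_p$. The discrete Hodge star $\star_h:\hat\Lambda^k_d\to\hat\Lambda^{2-k}_p$ is defined by $\langle\gamma,\star_h\omega\rangle=(-1)^k\int_\Omega\gamma\wedge\omega$ for all $\gamma\in\hat\Lambda^{2-k}_p$. Elements of $\hat\Lambda^1_d$ have tangentially continuous traces across dual-mesh edges, so that their integral along a dual edge is single-valued, and Stokes' theorem $\int_{e'}d\alpha=\int_{\partial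 e'}\alpha$ holds on each dual cell $e'$ for $\alpha\in\hat\Lambda^1_d$. *)

theory Defs
  imports "HOL-Analysis.Analysis"
begin

text \<open>The types 'a, 'b, 'c model (piecewise smooth,
square integrable) 0-, 1- and 2-forms on Omega.\<close>

record ('a, 'b, 'c) pd_struct =
  intg :: "'c \<Rightarrow> real"
  w02  :: "'a \<Rightarrow> 'c \<Rightarrow> 'c"      \<comment> \<open>wedge of a 0-form and a 2-form\<close>
  w11  :: "'b \<Rightarrow> 'b \<Rightarrow> 'c"
  w20  :: "'c \<Rightarrow> 'a \<Rightarrow> 'c"
  hs0  :: "'a \<Rightarrow> 'c"              \<comment> \<open>continuous Hodge star on 0-forms\<close>
  hs1  :: "'b \<Rightarrow> 'b"
  hs2  :: "'c \<Rightarrow> 'a"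
  ext0 :: "'a \<Rightarrow> 'b"
  ext1 :: "'b \<Rightarrow> 'c"
  P0 :: "'a set"  P1 :: "'b set"  P2 :: "'c set"
  D0 :: "'a set"  D1 :: "'b set"  D2 :: "'c set"

definition ip0 :: "('a,'b,'c,'z) pd_struct_scheme \<Rightarrow> 'a \<Rightarrow> 'a \<Rightarrow> real" where
  "ip0 S x y = intg S (w02 S x (hs0 S y))"
definition ip1 :: "('a,'b,'c,'z) pd_struct_scheme \<Rightarrow> 'b \<Rightarrow> 'b \<Rightarrow> real" where
  "ip1 S x y = intg S (w11 S x (hs1 S y))"
definition ip2 :: "('a,'b,'c,'z) pd_struct_scheme \<Rightarrow> 'c \<Rightarrow> 'c \<Rightarrow> real" where
  "ip2 S x y = intg S (w20 S x (hs2 S y))"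

definition fin_dim_space :: "'v::real_vector set \<Rightarrow> bool" where
  "fin_dim_space V \<longleftrightarrow> (\<exists>B. finite B \<and> B \<subseteq> V \<and> span B = V)"

definition pd_setting :: "('a::real_vector,'b::real_vector,'c::real_vector) pd_struct \<Rightarrow> bool" where
  "pd_setting S \<longleftrightarrow>
     linear (intg S) \<and> bilinear (w02 S) \<and> bilinear (w11 S) \<and> bilinear (w20 S) \<and>
     (\<forall>x y. w20 S y x = w02 S x y) \<and> (\<forall>x y. w11 S x y = - w11 S y x) \<and>
     linear (hs0 S) \<and> linear (hs1 S) \<and> linear (hs2 S) \<and>
     linear (ext0 S) \<and> linear (ext1 S) \<and>
     fin_dim_space (P0 S) \<and> fin_dim_space (P1 S) \<and> fin_dim_space (P2 S) \<and>
     fin_dim_space (D0 S) \<and> fin_dim_space (D1 S) \<and> fin_dim_space (D2 S) \<and>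
     ext0 S ` P0 S \<subseteq> P1 S \<and> ext1 S ` P1 S \<subseteq> P2 S \<and>
     ext0 S ` D0 S \<subseteq> D1 S \<and> ext1 S ` D1 S \<subseteq> D2 S \<and>
     (\<forall>x \<in> P0 S \<union> D0 S. ext1 S (ext0 S x) = 0) \<and>
     \<comment> \<open>integration by parts, j = 0 and j = 1\<close>
     (\<forall>x \<in> P0 S \<union> D0 S. \<forall>y \<in> P1 S \<union> D1 S.
        intg S (w11 S (ext0 S x) y) = - intg S (w02 S x (ext1 S y))) \<and>
     (\<forall>x \<in> P1 S \<union> D1 S. \<forall>y \<in> P0 S \<union> D0 S.
        intg S (w20 S (ext1 S x) y) = intg S (w11 S x (ext0 S y))) \<and>
     \<comment> \<open>the L2 inner product is symmetric and positive definite\<close>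
     (\<forall>x y. ip0 S x y = ip0 S y x) \<and> (\<forall>x y. ip1 S x y = ip1 S y x) \<and>
     (\<forall>x y. ip2 S x y = ip2 S y x) \<and>
     (\<forall>x. x \<noteq> 0 \<longrightarrow> ip0 S x x > 0) \<and> (\<forall>x. x \<noteq> 0 \<longrightarrow> ip1 S x x > 0) \<and>
     (\<forall>x. x \<noteq> 0 \<longrightarrow> ip2 S x x > 0)"

definition codiff1 :: "('a,'b,'c) pd_struct \<Rightarrow> 'b \<Rightarrow> 'a" where
  "codiff1 S w = (THE x. x \<in> P0 S \<and> (\<forall>g \<in> P0 S. ip0 S g x = ip1 S (ext0 S g) w))"
definition codiff2 :: "('a,'b,'c) pd_struct \<Rightarrow> 'c \<Rightarrow> 'b" where
  "codiff2 S w = (THE x. x \<in> P1 S \<and> (\<forall>g \<in> P1 S. ip1 S g x = ip2 S (ext1 S g) w))"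

definition dstar1 :: "('a,'b,'c) pd_struct \<Rightarrow> 'b \<Rightarrow> 'b" where
  "dstar1 S w = (THE x. x \<in> P1 S \<and> (\<forall>g \<in> P1 S. ip1 S g x = - intg S (w11 S g w)))"
definition dstar2 :: "('a,'b,'c) pd_struct \<Rightarrow> 'c \<Rightarrow> 'a" where
  "dstar2 S w = (THE x. x \<in> P0 S \<and> (\<forall>g \<in> P0 S. ip0 S g x = intg S (w02 S g w)))"

text \<open>Dual mesh: finitely many dual cells, each with a (linear) cell integral of
2-forms, summing to the integral over Omega; the boundary of each cell is a signed
(orientation +1/-1) set of dual edges; the line integral of a dual 1-form along an
edge is single-valued (eint); Stokes' theorem holds on each cell; every edge is
shared by exactly two cells with opposite orientations.\<close>
definition dual_mesh ::
  "('a::real_vector,'b::real_vector,'c::real_vector) pd_struct \<Rightarrow> 'cell set \<Rightarrow>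
   ('cell \<Rightarrow> 'edge set) \<Rightarrow> ('cell \<Rightarrow> 'edge \<Rightarrow> real) \<Rightarrow> ('cell \<Rightarrow> 'c \<Rightarrow> real) \<Rightarrow>
   ('edge \<Rightarrow> 'b \<Rightarrow> real) \<Rightarrow> bool" where
  "dual_mesh S cells edges osgn cint eint \<longleftrightarrow>
     finite cells \<and>
     (\<forall>w \<in> D2 S. intg S w = (\<Sum>c\<in>cells. cint c w)) \<and>
     (\<forall>c \<in> cells. finite (edges c) \<and> linear (cint c) \<and>
        (\<forall>e \<in> edges c. osgn c e = 1 \<or> osgn c e = -1) \<and>
        (\<forall>a \<in> D1 S. cint c (ext1 S a) = (\<Sum>e\<in>edges c. osgn c e * eint e a))) \<and>
     (\<forall>e \<in> (\<Union>c\<in>cells. edges c). \<exists>c1 c2. c1 \<noteq> c2 \<and>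
        {c \<in> cells. e \<in> edges c} = {c1, c2} \<and> osgn c1 e = - osgn c2 e)"

end

theory Submission
  imports Defs
begin

lemma coord_bound:
  fixes B :: "'b::real_normed_vector set"
  assumes fin: "finite B" and ind: "independent B"
  shows "\<exists>K. \<forall>c. (\<Sum>b\<in>B. \<bar>c b\<bar>) \<le> K * norm (\<Sum>b\<in>B. c b *\<^sub>R b)"
proof (rule ccontr)
  assume "\<not> ?thesis"
  then have "\<forall>n::nat. \<exists>c. (\<Sum>b\<in>B. \<bar>c b\<bar>) > real (Suc n) * norm (\<Sum>b\<in>B. c b *\<^sub>R b)"
    by (meson not_le)
  then obtain C where C: "\<And>n. (\<Sum>b\<in>B. \<bar>C n b\<bar>) > real (Suc n) * norm (\<Sum>b\<in>B. C n b *\<^sub>R b)"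
    by metis
  define Sn where "Sn n = (\<Sum>b\<in>B. \<bar>C n b\<bar>)" for n
  have Spos: "Sn n > 0" for n
  proof -
    have "0 \<le> real (Suc n) * norm (\<Sum>b\<in>B. C n b *\<^sub>R b)" by simp
    then show ?thesis using C[of n] unfolding Sn_def by linarith
  qed
  define D where "D n b = C n b / Sn n" for n b
  have D1: "(\<Sum>b\<in>B. \<bar>D n b\<bar>) = 1" for n
  proof -
    have "(\<Sum>b\<in>B. \<bar>D n b\<bar>) = (\<Sum>b\<in>B. \<bar>C n b\<bar>) / Sn n"
      unfolding D_def using Spos[of n] by (simp add: sum_divide_distrib)
    then show ?thesis using Spos[of n] unfolding Sn_def by simp
  qed
  have Dsmall: "norm (\<Sum>b\<in>B. D n b *\<^sub>R b) \<le> 1 / real (Suc n)" for n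
  proof -
    have eq: "(\<Sum>b\<in>B. D n b *\<^sub>R b) = (1 / Sn n) *\<^sub>R (\<Sum>b\<in>B. C n b *\<^sub>R b)"
      unfolding D_def by (simp add: scaleR_sum_right divide_inverse mult.commute)
    have "norm (\<Sum>b\<in>B. C n b *\<^sub>R b) < Sn n / real (Suc n)"
      using C[of n] unfolding Sn_def by (simp add: field_simps)
    then show ?thesis unfolding eq using Spos[of n]
      by (simp add: divide_simps)
  qed
  have Dbd: "\<bar>D n b\<bar> \<le> 1" if "b \<in> B" for n b
  proof -
    have "\<bar>D n b\<bar> \<le> (\<Sum>b\<in>B. \<bar>D n b\<bar>)"
      using that fin by (intro member_le_sum) auto
    then show ?thesis using D1 by simp
  qed
  have bnd: "bounded ((\<lambda>x. x k) ` range D)" if "k \<in> B" for k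
    unfolding bounded_iff using Dbd[OF that] by auto
  from compact_lemma_general[where f=D and proj="\<lambda>x k. x k" and unproj=id and basis=B,
      OF fin bnd, simplified]
  obtain l and r :: "nat \<Rightarrow> nat" where r: "strict_mono r"
    and conv: "\<forall>\<epsilon>>0. eventually (\<lambda>n. \<forall>i\<in>B. dist (D (r n) i) (l i) < \<epsilon>) sequentially"
    by blast
  have lim: "(\<lambda>n. D (r n) i) \<longlonglongrightarrow> l i" if "i \<in> B" for i
    unfolding tendsto_iff
  proof (intro allI impI)
    fix e :: real assume "e > 0"
    then show "eventually (\<lambda>n. dist (D (r n) i) (l i) < e) sequentially"
    proof -
      have "eventually (\<lambda>n. \<forall>i\<in>B. dist (D (r n) i) (l i) < e) sequentially"
        using conv \<open>e > 0\<close> by blast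
      then show ?thesis by (rule eventually_mono) (use that in blast)
    qed
  qed
  have "(\<lambda>n. \<Sum>b\<in>B. \<bar>D (r n) b\<bar>) \<longlonglongrightarrow> (\<Sum>b\<in>B. \<bar>l b\<bar>)"
    by (intro tendsto_sum tendsto_rabs lim)
  then have l1: "(\<Sum>b\<in>B. \<bar>l b\<bar>) = 1"
    using D1 by (simp add: LIMSEQ_const_iff)
  have limv: "(\<lambda>n. \<Sum>b\<in>B. D (r n) b *\<^sub>R b) \<longlonglongrightarrow> (\<Sum>b\<in>B. l b *\<^sub>R b)"
    by (intro tendsto_sum tendsto_scaleR lim tendsto_const)
  have g0: "(\<lambda>n. 1 / real (Suc n)) \<longlonglongrightarrow> (0::real)"
    using LIMSEQ_Suc[OF lim_1_over_n] by simp
  have "(\<lambda>n. \<Sum>b\<in>B. D (r n) b *\<^sub>R b) \<longlonglongrightarrow> 0"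
  proof (rule Lim_null_comparison[OF _ g0])
    show "\<forall>\<^sub>F n in sequentially. norm (\<Sum>b\<in>B. D (r n) b *\<^sub>R b) \<le> 1 / real (Suc n)"
    proof (intro always_eventually allI)
      fix n
      have "n \<le> r n" using r by (simp add: seq_suble)
      then have "1 / real (Suc (r n)) \<le> 1 / real (Suc n)" by (simp add: frac_le)
      then show "norm (\<Sum>b\<in>B. D (r n) b *\<^sub>R b) \<le> 1 / real (Suc n)"
        using Dsmall[of "r n"] by linarith
    qed
  qed
  then have "(\<Sum>b\<in>B. l b *\<^sub>R b) = 0" using limv LIMSEQ_unique by blast
  then have "\<forall>v\<in>B. l v = 0" using ind dependent_finite[OF fin] by blast
  then show False using l1 by simp
qed


lemma fin_dim_subspace: "fin_dim_space V \<Longrightarrow> subspace V"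
  unfolding fin_dim_space_def using subspace_span by metis

lemma lin_on_sum:
  fixes f :: "'a::real_vector \<Rightarrow> 'c::real_vector"
  assumes add: "\<forall>x\<in>V. \<forall>y\<in>V. f (x + y) = f x + f y"
    and sc: "\<forall>x\<in>V. \<forall>a. f (a *\<^sub>R x) = a *\<^sub>R f x"
    and V: "subspace V" and fin: "finite B" and BV: "B \<subseteq> V"
  shows "f (\<Sum>b\<in>B. c b *\<^sub>R b) = (\<Sum>b\<in>B. c b *\<^sub>R f b)"
  using fin BV
proof (induction B rule: finite_induct)
  case empty
  have "f 0 + f 0 = f 0 + 0" using add V subspace_0 by (metis add_0 add_0_right)
  then have "f 0 = 0" by simp
  then show ?case by simp
next
  case (insert x F)
  have "(\<Sum>b\<in>F. c b *\<^sub>R b) \<in> V"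
    using insert V by (intro subspace_sum) (auto intro: subspace_scale)
  moreover have "c x *\<^sub>R x \<in> V" using insert V by (auto intro: subspace_scale)
  ultimately show ?case using insert add sc by (simp add: add.commute)
qed

lemma fin_bound:
  fixes f :: "'b::real_normed_vector \<Rightarrow> 'c::real_normed_vector"
  assumes V: "fin_dim_space V"
    and add: "\<forall>x\<in>V. \<forall>y\<in>V. f (x + y) = f x + f y"
    and sc: "\<forall>x\<in>V. \<forall>a. f (a *\<^sub>R x) = a *\<^sub>R f x"
  shows "\<exists>K. \<forall>x\<in>V. norm (f x) \<le> K * norm x"
proof -
  obtain B0 where B0: "finite B0" "B0 \<subseteq> V" "span B0 = V" using V unfolding fin_dim_space_def by blast
  obtain B where B: "B \<subseteq> B0" "independent B" "B0 \<subseteq> span B"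
    using maximal_independent_subset by blast
  have finB: "finite B" using B0 B finite_subset by blast
  have spB: "span B = V"
  proof
    show "span B \<subseteq> V" using B0 B span_mono by blast
    show "V \<subseteq> span B" using B0 B span_minimal[OF _ subspace_span] by blast
  qed
  have sub: "subspace V" using fin_dim_subspace[OF V] .
  have BV: "B \<subseteq> V" using B B0 by blast
  obtain K0 where K0: "\<And>c. (\<Sum>b\<in>B. \<bar>c b\<bar>) \<le> K0 * norm (\<Sum>b\<in>B. c b *\<^sub>R b)"
    using coord_bound[OF finB B(2)] by blast
  define F where "F = (\<Sum>b\<in>B. norm (f b))"
  have F0: "F \<ge> 0" unfolding F_def by (simp add: sum_nonneg)
  show ?thesis
  proof (intro exI ballI)
    fix x assume "x \<in> V"
    then obtain c where x: "x = (\<Sum>b\<in>B. c b *\<^sub>R b)" using span_finite[OF finB] spB by auto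
    have "f x = (\<Sum>b\<in>B. c b *\<^sub>R f b)" unfolding x using lin_on_sum[OF add sc sub finB BV] .
    then have "norm (f x) \<le> (\<Sum>b\<in>B. \<bar>c b\<bar> * norm (f b))"
      by (metis (no_types, lifting) norm_scaleR norm_sum sum.cong)
    also have "\<dots> \<le> (\<Sum>b\<in>B. \<bar>c b\<bar> * F)"
    proof (intro sum_mono mult_left_mono)
      fix b assume "b \<in> B"
      then show "norm (f b) \<le> F" unfolding F_def using finB by (intro member_le_sum) auto
    qed auto
    also have "\<dots> = F * (\<Sum>b\<in>B. \<bar>c b\<bar>)" by (simp add: sum_distrib_left mult.commute)
    also have "\<dots> \<le> F * (K0 * norm x)" using K0[of c] x F0 by (simp add: mult_left_mono)
    finally show "norm (f x) \<le> (F * K0) * norm x" by simp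
  qed
qed

lemma fin_deriv:
  fixes f :: "'b::real_normed_vector \<Rightarrow> 'c::real_normed_vector"
    and \<sigma> :: "real \<Rightarrow> 'b" and g :: "real \<Rightarrow> 'c"
  assumes V: "fin_dim_space V"
    and add: "\<forall>x\<in>V. \<forall>y\<in>V. f (x + y) = f x + f y"
    and sc: "\<forall>x\<in>V. \<forall>a. f (a *\<^sub>R x) = a *\<^sub>R f x"
    and T: "open T" "t \<in> T" and inV: "\<forall>s\<in>T. \<sigma> s \<in> V" and dV: "d \<in> V"
    and der: "(\<sigma> has_vector_derivative d) (at t)"
    and g: "\<forall>s\<in>T. g s = f (\<sigma> s)"
  shows "(g has_vector_derivative f d) (at t)"
proof -
  obtain K where K: "\<forall>x\<in>V. norm (f x) \<le> K * norm x" using fin_bound[OF V add sc] by blast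
  have sub: "subspace V" using fin_dim_subspace[OF V] .
  have diff: "f (x - y) = f x - f y" if "x \<in> V" "y \<in> V" for x y
  proof -
    have "x - y \<in> V" using sub that subspace_diff by blast
    then have "f x = f (x - y) + f y" using add that by (metis diff_add_cancel)
    then show ?thesis by simp
  qed
  have lim0: "(\<lambda>h. norm (\<sigma> (t + h) - \<sigma> t - h *\<^sub>R d) / norm h) \<midarrow>0\<rightarrow> 0"
    using der unfolding has_vector_derivative_def has_derivative_at by blast
  obtain e where e: "e > 0" "ball t e \<subseteq> T" using T open_contains_ball by blast
  have ev: "eventually (\<lambda>h. t + h \<in> T) (at (0::real))"
    unfolding eventually_at using e by (intro exI[of _ e]) (auto simp: dist_norm subset_eq)
  have "(\<lambda>h. norm (g (t + h) - g t - h *\<^sub>R f d) / norm h) \<midarrow>0\<rightarrow> 0"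
  proof (rule Lim_null_comparison)
    show "((\<lambda>h. K * (norm (\<sigma> (t + h) - \<sigma> t - h *\<^sub>R d) / norm h)) \<longlongrightarrow> 0) (at 0)"
      using tendsto_mult_right_zero[OF lim0] by simp
    show "\<forall>\<^sub>F h in at 0. norm (norm (g (t + h) - g t - h *\<^sub>R f d) / norm h)
           \<le> K * (norm (\<sigma> (t + h) - \<sigma> t - h *\<^sub>R d) / norm h)"
      using ev
    proof (rule eventually_mono)
      fix h assume h: "t + h \<in> T"
      have m: "\<sigma> (t + h) - \<sigma> t \<in> V" using sub inV h T subspace_diff by blast
      have hd: "h *\<^sub>R d \<in> V" using sub dV subspace_scale by blast
      have "g (t + h) - g t - h *\<^sub>R f d = f (\<sigma> (t + h) - \<sigma> t - h *\<^sub>R d)"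
        using g h T diff[OF m hd] diff[of "\<sigma> (t + h)" "\<sigma> t"] inV sc dV by auto
      moreover have "\<sigma> (t + h) - \<sigma> t - h *\<^sub>R d \<in> V" using m hd sub subspace_diff by blast
      ultimately have "norm (g (t + h) - g t - h *\<^sub>R f d) \<le> K * norm (\<sigma> (t + h) - \<sigma> t - h *\<^sub>R d)"
        using K by simp
      then show "norm (norm (g (t + h) - g t - h *\<^sub>R f d) / norm h)
           \<le> K * (norm (\<sigma> (t + h) - \<sigma> t - h *\<^sub>R d) / norm h)"
        by (simp add: divide_right_mono)
    qed
  qed
  then show ?thesis
    unfolding has_vector_derivative_def has_derivative_at
    by (simp add: bounded_linear_scaleR_left)
qed

lemma riesz_span:
  fixes ip :: "'v::real_vector \<Rightarrow> 'v \<Rightarrow> real"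
  assumes bil: "bilinear ip" and sym: "\<forall>x y. ip x y = ip y x"
    and pos: "\<forall>x. x \<noteq> 0 \<longrightarrow> ip x x > 0" and fin: "finite B"
  shows "\<forall>lf. linear lf \<longrightarrow> (\<exists>x\<in>span B. \<forall>g\<in>span B. ip g x = lf g)"
  using fin
proof (induction B rule: finite_induct)
  case empty
  show ?case
  proof (intro allI impI)
    fix lf :: "'v \<Rightarrow> real" assume "linear lf"
    then show "\<exists>x\<in>span {}. \<forall>g\<in>span {}. ip g x = lf g"
      using bilinear_lzero[OF bil] by (auto simp: linear_0)
  qed
next
  case (insert b B)
  note ipr = bilinear_ladd[OF bil] bilinear_radd[OF bil] bilinear_lmul[OF bil] bilinear_rmul[OF bil]
    bilinear_lsub[OF bil] bilinear_rsub[OF bil]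
  show ?case
  proof (intro allI impI)
    fix lf :: "'v \<Rightarrow> real" assume l: "linear lf"
    obtain x0 where x0: "x0 \<in> span B" "\<forall>g\<in>span B. ip g x0 = lf g" using insert.IH l by blast
    have lb: "linear (\<lambda>g. ip g b)" using bil unfolding bilinear_def by blast
    obtain y where y: "y \<in> span B" "\<forall>g\<in>span B. ip g y = ip g b" using insert.IH lb by blast
    define b' where "b' = b - y"
    have ortho: "ip s b' = 0" if "s \<in> span B" for s
      using y that unfolding b'_def by (simp add: ipr)
    have sub: "span B \<subseteq> span (insert b B)" by (simp add: span_mono subset_insertI)
    show "\<exists>x\<in>span (insert b B). \<forall>g\<in>span (insert b B). ip g x = lf g"
    proof (cases "b' = 0")
      case True
      then have "b \<in> span B" using y unfolding b'_def by simp
      then have "span (insert b B) = span B" by (rule span_redundant)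
      then show ?thesis using x0 by auto
    next
      case False
      define c where "c = (lf b' - ip b' x0) / ip b' b'"
      have pb: "ip b' b' > 0" using pos False by blast
      define x where "x = x0 + c *\<^sub>R b'"
      have bin: "b \<in> span (insert b B)" by (simp add: span_base)
      have b'in: "b' \<in> span (insert b B)" unfolding b'_def using bin y sub
        by (meson span_diff subsetD)
      have xin: "x \<in> span (insert b B)" unfolding x_def using x0 sub b'in
        by (meson span_add span_scale subsetD)
      have iss: "ip s x = lf s" if "s \<in> span B" for s
        using x0 ortho[OF that] that unfolding x_def by (simp add: ipr)
      have ib: "ip b x = lf b"
      proof -
        have bb: "b = b' + y" unfolding b'_def by simp
        have "ip b x = ip b' x0 + c * ip b' b' + ip y x0 + c * ip y b'"
          unfolding x_def bb by (simp add: ipr algebra_simps)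
        also have "ip y b' = 0" using ortho[OF y(1)] .
        also have "ip y x0 = lf y" using x0 y by blast
        also have "c * ip b' b' = lf b' - ip b' x0" unfolding c_def using pb by simp
        finally have "ip b x = lf b' + lf y" by simp
        also have "\<dots> = lf b" using linear_add[OF l, of b' y] bb by simp
        finally show ?thesis .
      qed
      show ?thesis
      proof (intro bexI[OF _ xin] ballI)
        fix g assume "g \<in> span (insert b B)"
        then obtain k where k: "g - k *\<^sub>R b \<in> span B" using span_insert by blast
        have g: "g = (g - k *\<^sub>R b) + k *\<^sub>R b" by simp
        have "ip g x = ip (g - k *\<^sub>R b) x + k * ip b x"
          by (subst g) (simp add: ipr)
        also have "\<dots> = lf (g - k *\<^sub>R b) + k * lf b" using iss[OF k] ib by simp
        also have "\<dots> = lf g" using linear_diff[OF l] linear_scale[OF l] by simp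
        finally show "ip g x = lf g" .
      qed
    qed
  qed
qed

lemma riesz:
  fixes ip :: "'v::real_vector \<Rightarrow> 'v \<Rightarrow> real"
  assumes bil: "bilinear ip" and sym: "\<forall>x y. ip x y = ip y x"
    and pos: "\<forall>x. x \<noteq> 0 \<longrightarrow> ip x x > 0" and V: "fin_dim_space V" and l: "linear lf"
  shows "\<exists>!x. x \<in> V \<and> (\<forall>g\<in>V. ip g x = lf g)"
proof -
  obtain B where B: "finite B" "B \<subseteq> V" "span B = V" using V unfolding fin_dim_space_def by blast
  have sub: "subspace V" using fin_dim_subspace[OF V] .
  obtain x where x: "x \<in> V" "\<forall>g\<in>V. ip g x = lf g"
    using riesz_span[OF bil sym pos B(1)] l B(3) by blast
  show ?thesis
  proof (rule ex1I[of _ x])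
    show "x \<in> V \<and> (\<forall>g\<in>V. ip g x = lf g)" using x by blast
    fix z assume z: "z \<in> V \<and> (\<forall>g\<in>V. ip g z = lf g)"
    have d: "z - x \<in> V" using z x sub subspace_diff by blast
    have "ip (z - x) (z - x) = 0"
      using z x d by (simp add: bilinear_rsub[OF bil])
    then have "z - x = 0" using pos by (metis less_irrefl)
    then show "z = x" by simp
  qed
qed


theorem mainTheorem13:
  fixes S :: "('a::real_normed_vector, 'b::real_normed_vector, 'c::real_normed_vector) pd_struct"
    and T :: "real set"
    and \<sigma> \<sigma>' Q :: "real \<Rightarrow> 'b" and \<rho> :: "real \<Rightarrow> 'c"
    and cells :: "'cell set" and edges :: "'cell \<Rightarrow> 'edge set"
    and osgn :: "'cell \<Rightarrow> 'edge \<Rightarrow> real" and cint :: "'cell \<Rightarrow> 'c \<Rightarrow> real"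
    and eint :: "'edge \<Rightarrow> 'b \<Rightarrow> real"
  assumes setting: "pd_setting S"
    and mesh: "dual_mesh S cells edges osgn cint eint"
    and bij1: "bij_betw (dstar1 S) (D1 S) (P1 S)"
    and bij2: "bij_betw (dstar2 S) (D2 S) (P0 S)"
    and T: "open T"
    and sigma: "\<forall>t\<in>T. \<sigma> t \<in> P1 S \<and> (\<sigma> has_vector_derivative \<sigma>' t) (at t)"
    and sigma_C1: "continuous_on T \<sigma>'"
    and eq: "\<forall>t\<in>T. Q t \<in> D1 S \<and> \<rho> t \<in> P2 S \<and>
                   \<sigma>' t + dstar1 S (Q t) + codiff2 S (\<rho> t) = 0"
  shows "let \<zeta>p = (\<lambda>t. codiff1 S (\<sigma> t));
             Z = (\<lambda>t. inv_into (D2 S) (dstar2 S) (\<zeta>p t));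
             v = (\<lambda>t. inv_into (D1 S) (dstar1 S) (\<sigma> t))
         in (\<forall>t\<in>T. Z t = ext1 S (v t)) \<and>
            (\<forall>t\<in>T. (Z has_vector_derivative - ext1 S (Q t)) (at t)) \<and>
            (\<forall>c\<in>cells. \<forall>t\<in>T.
               ((\<lambda>s. cint c (Z s)) has_real_derivative
                  - (\<Sum>e\<in>edges c. osgn c e * eint e (Q t))) (at t))"
proof -
  have intgL: "linear (intg S)" and w02B: "bilinear (w02 S)" and w11B: "bilinear (w11 S)"
    and w20B: "bilinear (w20 S)" and w2002: "\<forall>x y. w20 S y x = w02 S x y"
    and w11as: "\<forall>x y. w11 S x y = - w11 S y x"
    and hs0L: "linear (hs0 S)" and hs1L: "linear (hs1 S)" and hs2L: "linear (hs2 S)"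
    and e0L: "linear (ext0 S)" and e1L: "linear (ext1 S)"
    and fP0: "fin_dim_space (P0 S)" and fP1: "fin_dim_space (P1 S)" and fP2: "fin_dim_space (P2 S)"
    and fD1: "fin_dim_space (D1 S)" and fD2: "fin_dim_space (D2 S)"
    and e0P: "ext0 S ` P0 S \<subseteq> P1 S" and e1P: "ext1 S ` P1 S \<subseteq> P2 S"
    and e1D: "ext1 S ` D1 S \<subseteq> D2 S"
    and dd: "\<forall>x \<in> P0 S \<union> D0 S. ext1 S (ext0 S x) = 0"
    and ibp1: "\<forall>x \<in> P1 S \<union> D1 S. \<forall>y \<in> P0 S \<union> D0 S.
        intg S (w20 S (ext1 S x) y) = intg S (w11 S x (ext0 S y))"
    and sy0: "\<forall>x y. ip0 S x y = ip0 S y x" and sy1: "\<forall>x y. ip1 S x y = ip1 S y x"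
    and sy2: "\<forall>x y. ip2 S x y = ip2 S y x"
    and po0: "\<forall>x. x \<noteq> 0 \<longrightarrow> ip0 S x x > 0" and po1: "\<forall>x. x \<noteq> 0 \<longrightarrow> ip1 S x x > 0"
    and po2: "\<forall>x. x \<noteq> 0 \<longrightarrow> ip2 S x x > 0"
    using setting unfolding pd_setting_def
    apply -
    apply (elim conjE, assumption)+
    done
  note lins = linear_add[OF intgL] linear_scale[OF intgL] linear_neg[OF intgL] linear_diff[OF intgL]
    linear_add[OF hs0L] linear_scale[OF hs0L] linear_add[OF hs1L] linear_scale[OF hs1L]
    linear_add[OF hs2L] linear_scale[OF hs2L]
    linear_add[OF e0L] linear_scale[OF e0L] linear_add[OF e1L] linear_scale[OF e1L]
    linear_0[OF e1L] linear_0[OF e0L] linear_0[OF intgL] linear_neg[OF e1L] linear_diff[OF e1L]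
    bilinear_ladd[OF w02B] bilinear_radd[OF w02B] bilinear_lmul[OF w02B] bilinear_rmul[OF w02B]
    bilinear_ladd[OF w11B] bilinear_radd[OF w11B] bilinear_lmul[OF w11B] bilinear_rmul[OF w11B]
    bilinear_ladd[OF w20B] bilinear_radd[OF w20B] bilinear_lmul[OF w20B] bilinear_rmul[OF w20B]
    bilinear_lzero[OF w02B] bilinear_rzero[OF w02B] bilinear_lzero[OF w11B] bilinear_rzero[OF w11B]
    bilinear_lzero[OF w20B] bilinear_rzero[OF w20B]
  have bil0: "bilinear (ip0 S)" unfolding bilinear_def ip0_def
    by (intro conjI allI linearI) (simp_all add: lins)
  have bil1: "bilinear (ip1 S)" unfolding bilinear_def ip1_def
    by (intro conjI allI linearI) (simp_all add: lins)
  have bil2: "bilinear (ip2 S)" unfolding bilinear_def ip2_def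
    by (intro conjI allI linearI) (simp_all add: lins)
  have sP0: "subspace (P0 S)" using fin_dim_subspace[OF fP0] .
  have sP1: "subspace (P1 S)" using fin_dim_subspace[OF fP1] .
  have sD1: "subspace (D1 S)" using fin_dim_subspace[OF fD1] .
  have sD2: "subspace (D2 S)" using fin_dim_subspace[OF fD2] .
  have E1: "\<exists>!x. x \<in> P1 S \<and> (\<forall>g\<in>P1 S. ip1 S g x = - intg S (w11 S g w))" for w
    by (rule riesz[OF bil1 sy1 po1 fP1]) (intro linearI, simp_all add: lins)
  have E2: "\<exists>!x. x \<in> P0 S \<and> (\<forall>g\<in>P0 S. ip0 S g x = intg S (w02 S g w))" for w
    by (rule riesz[OF bil0 sy0 po0 fP0]) (intro linearI, simp_all add: lins)
  have C1: "\<exists>!x. x \<in> P0 S \<and> (\<forall>g\<in>P0 S. ip0 S g x = ip1 S (ext0 S g) w)" for w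
    by (rule riesz[OF bil0 sy0 po0 fP0])
      (intro linearI, simp_all add: lins bilinear_ladd[OF bil1] bilinear_lmul[OF bil1])
  have C2: "\<exists>!x. x \<in> P1 S \<and> (\<forall>g\<in>P1 S. ip1 S g x = ip2 S (ext1 S g) w)" for w
    by (rule riesz[OF bil1 sy1 po1 fP1])
      (intro linearI, simp_all add: lins bilinear_ladd[OF bil2] bilinear_lmul[OF bil2])
  have d1: "dstar1 S w \<in> P1 S \<and> (\<forall>g\<in>P1 S. ip1 S g (dstar1 S w) = - intg S (w11 S g w))" for w
    unfolding dstar1_def by (rule theI'[OF E1])
  have d2: "dstar2 S w \<in> P0 S \<and> (\<forall>g\<in>P0 S. ip0 S g (dstar2 S w) = intg S (w02 S g w))" for w
    unfolding dstar2_def by (rule theI'[OF E2])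
  have c2: "codiff2 S w \<in> P1 S \<and> (\<forall>g\<in>P1 S. ip1 S g (codiff2 S w) = ip2 S (ext1 S g) w)" for w
    unfolding codiff2_def by (rule theI'[OF C2])
  have d1u: "dstar1 S w = x" if "x \<in> P1 S" "\<forall>g\<in>P1 S. ip1 S g x = - intg S (w11 S g w)" for w x
    unfolding dstar1_def using that by (intro the1_equality[OF E1]) auto
  have d2u: "dstar2 S w = x" if "x \<in> P0 S" "\<forall>g\<in>P0 S. ip0 S g x = intg S (w02 S g w)" for w x
    unfolding dstar2_def using that by (intro the1_equality[OF E2]) auto
  have c1u: "codiff1 S w = x" if "x \<in> P0 S" "\<forall>g\<in>P0 S. ip0 S g x = ip1 S (ext0 S g) w" for w x
    unfolding codiff1_def using that by (intro the1_equality[OF C1]) auto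
  have d1add: "dstar1 S (a + b) = dstar1 S a + dstar1 S b" for a b
    using d1[of a] d1[of b] sP1
    by (intro d1u) (auto simp: subspace_add bilinear_radd[OF bil1] lins)
  have d1sc: "dstar1 S (r *\<^sub>R a) = r *\<^sub>R dstar1 S a" for r a
    using d1[of a] sP1
    by (intro d1u) (auto simp: subspace_scale bilinear_rmul[OF bil1] lins)
  have d20: "dstar2 S 0 = 0"
    using sP0 by (intro d2u) (auto simp: subspace_0 bilinear_rzero[OF bil0] lins)
  have inj1: "inj_on (dstar1 S) (D1 S)" and im1: "dstar1 S ` D1 S = P1 S"
    using bij1 unfolding bij_betw_def by auto
  have inj2: "inj_on (dstar2 S) (D2 S)" and im2: "dstar2 S ` D2 S = P0 S"
    using bij2 unfolding bij_betw_def by auto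
  define L where "L = inv_into (D1 S) (dstar1 S)"
  have Lin: "L p \<in> D1 S" "dstar1 S (L p) = p" if "p \<in> P1 S" for p
    unfolding L_def using that im1 by (auto intro: inv_into_into f_inv_into_f)
  have Lfd: "L (dstar1 S q) = q" if "q \<in> D1 S" for q
    unfolding L_def using inv_into_f_f[OF inj1 that] .
  have Ladd: "L (p + q) = L p + L q" if "p \<in> P1 S" "q \<in> P1 S" for p q
  proof -
    have "L p + L q \<in> D1 S" using Lin that sD1 subspace_add by blast
    moreover have "dstar1 S (L p + L q) = p + q" using d1add Lin that by simp
    ultimately show ?thesis using Lfd by metis
  qed
  have Lsc: "L (r *\<^sub>R p) = r *\<^sub>R L p" if "p \<in> P1 S" for r p
  proof -
    have "r *\<^sub>R L p \<in> D1 S" using Lin that sD1 subspace_scale by blast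
    moreover have "dstar1 S (r *\<^sub>R L p) = r *\<^sub>R p" using d1sc Lin that by simp
    ultimately show ?thesis using Lfd by metis
  qed
  define M where "M p = ext1 S (L p)" for p
  have Madd: "\<forall>x\<in>P1 S. \<forall>y\<in>P1 S. M (x + y) = M x + M y"
    unfolding M_def using Ladd by (simp add: lins)
  have Msc: "\<forall>x\<in>P1 S. \<forall>a. M (a *\<^sub>R x) = a *\<^sub>R M x"
    unfolding M_def using Lsc by (simp add: lins)
  have K1: "dstar2 S (ext1 S u) = codiff1 S (dstar1 S u)" if u: "u \<in> D1 S" for u
  proof (rule sym, rule c1u)
    show "dstar2 S (ext1 S u) \<in> P0 S" using d2 by blast
    show "\<forall>g\<in>P0 S. ip0 S g (dstar2 S (ext1 S u)) = ip1 S (ext0 S g) (dstar1 S u)"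
    proof
      fix g assume g: "g \<in> P0 S"
      have eg: "ext0 S g \<in> P1 S" using e0P g by blast
      have "ip0 S g (dstar2 S (ext1 S u)) = intg S (w02 S g (ext1 S u))" using d2 g by blast
      also have "\<dots> = intg S (w20 S (ext1 S u) g)" using w2002 by simp
      also have "\<dots> = intg S (w11 S u (ext0 S g))" using ibp1 u g by blast
      also have "\<dots> = - intg S (w11 S (ext0 S g) u)" using w11as lins by metis
      also have "\<dots> = ip1 S (ext0 S g) (dstar1 S u)" using d1 eg by metis
      finally show "ip0 S g (dstar2 S (ext1 S u)) = ip1 S (ext0 S g) (dstar1 S u)" .
    qed
  qed
  have cc0: "codiff1 S (codiff2 S w) = 0" for w
  proof (rule c1u)
    show "0 \<in> P0 S" using sP0 subspace_0 by blast
    show "\<forall>g\<in>P0 S. ip0 S g 0 = ip1 S (ext0 S g) (codiff2 S w)"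
    proof
      fix g assume g: "g \<in> P0 S"
      have eg: "ext0 S g \<in> P1 S" using e0P g by blast
      have "ip1 S (ext0 S g) (codiff2 S w) = ip2 S (ext1 S (ext0 S g)) w" using c2 eg by blast
      also have "\<dots> = 0" using dd g bilinear_lzero[OF bil2] by simp
      finally show "ip0 S g 0 = ip1 S (ext0 S g) (codiff2 S w)"
        using bilinear_rzero[OF bil0] by simp
    qed
  qed
  have e1Lz: "ext1 S (L (codiff2 S w)) = 0" for w
  proof -
    have p: "codiff2 S w \<in> P1 S" using c2 by blast
    have u: "L (codiff2 S w) \<in> D1 S" using Lin[OF p] by blast
    have "dstar2 S (ext1 S (L (codiff2 S w))) = 0"
      using K1[OF u] Lin[OF p] cc0 by simp
    moreover have "ext1 S (L (codiff2 S w)) \<in> D2 S" using e1D u by blast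
    moreover have "(0::'c) \<in> D2 S" using sD2 subspace_0 by blast
    ultimately show ?thesis using inj2 d20 unfolding inj_on_def by metis
  qed
  define Z where "Z t = inv_into (D2 S) (dstar2 S) (codiff1 S (\<sigma> t))" for t
  define v where "v t = inv_into (D1 S) (dstar1 S) (\<sigma> t)" for t
  have claim1: "Z t = ext1 S (v t)" if t: "t \<in> T" for t
  proof -
    have p: "\<sigma> t \<in> P1 S" using sigma t by blast
    have vt: "v t = L (\<sigma> t)" unfolding v_def L_def ..
    have "v t \<in> D1 S" "dstar1 S (v t) = \<sigma> t" using Lin[OF p] vt by auto
    then have "dstar2 S (ext1 S (v t)) = codiff1 S (\<sigma> t)" using K1 by metis
    moreover have "ext1 S (v t) \<in> D2 S" using e1D \<open>v t \<in> D1 S\<close> by blast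
    ultimately show ?thesis unfolding Z_def using inv_into_f_f[OF inj2] by metis
  qed
  have ZM: "\<forall>s\<in>T. Z s = M (\<sigma> s)" using claim1 unfolding M_def v_def L_def by simp
  have sP1T: "\<forall>s\<in>T. \<sigma> s \<in> P1 S" using sigma by blast
  have keyd: "\<sigma>' t \<in> P1 S \<and> M (\<sigma>' t) = - ext1 S (Q t)" if t: "t \<in> T" for t
  proof -
    have Qt: "Q t \<in> D1 S" and e: "\<sigma>' t + dstar1 S (Q t) + codiff2 S (\<rho> t) = 0" using eq t by auto
    have a: "dstar1 S (Q t) \<in> P1 S" using d1 by blast
    have b: "codiff2 S (\<rho> t) \<in> P1 S" using c2 by blast
    have s': "\<sigma>' t = (-1) *\<^sub>R dstar1 S (Q t) + (-1) *\<^sub>R codiff2 S (\<rho> t)"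
      using e by (simp add: eq_neg_iff_add_eq_0 algebra_simps)
    have a': "(-1) *\<^sub>R dstar1 S (Q t) \<in> P1 S" using a sP1 subspace_scale by blast
    have b': "(-1) *\<^sub>R codiff2 S (\<rho> t) \<in> P1 S" using b sP1 subspace_scale by blast
    have "\<sigma>' t \<in> P1 S" unfolding s' using a' b' sP1 subspace_add by blast
    moreover have "M (\<sigma>' t) = - ext1 S (Q t)"
    proof -
      have "M (\<sigma>' t) = M ((-1) *\<^sub>R dstar1 S (Q t)) + M ((-1) *\<^sub>R codiff2 S (\<rho> t))"
        unfolding s' using Madd a' b' by blast
      also have "M ((-1) *\<^sub>R dstar1 S (Q t)) = (-1) *\<^sub>R M (dstar1 S (Q t))"
        using Msc a by blast
      also have "M ((-1) *\<^sub>R codiff2 S (\<rho> t)) = (-1) *\<^sub>R M (codiff2 S (\<rho> t))"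
        using Msc b by blast
      also have "M (dstar1 S (Q t)) = ext1 S (Q t)" unfolding M_def using Lfd[OF Qt] by simp
      also have "M (codiff2 S (\<rho> t)) = 0" unfolding M_def using e1Lz by simp
      finally show ?thesis by simp
    qed
    ultimately show ?thesis by blast
  qed
  have claim2: "(Z has_vector_derivative - ext1 S (Q t)) (at t)" if t: "t \<in> T" for t
    using fin_deriv[OF fP1 Madd Msc T t sP1T _ _ ZM, of "\<sigma>' t"] keyd[OF t] sigma t by auto
  have claim3: "((\<lambda>s. cint c (Z s)) has_real_derivative
                  - (\<Sum>e\<in>edges c. osgn c e * eint e (Q t))) (at t)"
    if c: "c \<in> cells" and t: "t \<in> T" for c t
  proof -
    have cL: "linear (cint c)" and stokes: "\<forall>a \<in> D1 S. cint c (ext1 S a) = (\<Sum>e\<in>edges c. osgn c e * eint e a)"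
      using mesh c unfolding dual_mesh_def by auto
    have fadd: "\<forall>x\<in>P1 S. \<forall>y\<in>P1 S. cint c (M (x + y)) = cint c (M x) + cint c (M y)"
      using Madd linear_add[OF cL] by simp
    have fsc: "\<forall>x\<in>P1 S. \<forall>a. cint c (M (a *\<^sub>R x)) = a *\<^sub>R cint c (M x)"
      using Msc linear_scale[OF cL] by simp
    have "((\<lambda>s. cint c (Z s)) has_vector_derivative cint c (M (\<sigma>' t))) (at t)"
      using fin_deriv[OF fP1 fadd fsc T t sP1T _ _, of "\<sigma>' t" "\<lambda>s. cint c (Z s)"] keyd[OF t] sigma t ZM
      by auto
    moreover have "cint c (M (\<sigma>' t)) = - (\<Sum>e\<in>edges c. osgn c e * eint e (Q t))"
      using keyd[OF t] linear_neg[OF cL] stokes eq t by auto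
    ultimately show ?thesis
      by (simp add: has_real_derivative_iff_has_vector_derivative)
  qed
  show ?thesis
    unfolding Let_def using claim1 claim2 claim3 unfolding Z_def v_def by blast
qed

end
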